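(* Let $f$ be twice differentiable with $f''\neq 0$ (i.e.\ $f''>0$ throughout or $f''<0$ throughout) on an interval $I$, and let $s$ be the extended difference quotient $s(u,v)=\frac{f(u)-f(v)}{u-v}$ for $u\neq v$, $s(u,u)=f'(u)$. Consider a shock particle $(x_i,u_i^-,u_i^+)$ with neighbors $(x_{i-1},u_{i-1}^-,u_{i-1}^+)$ and $(x_{i+1},u_{i+1}^-,u_{i+1}^+)$, where $x_{i-1}<x_i<x_{i+1}$ and all values lie in $I$, evolving according to \[ \dot x_i = s(u_i^-,u_i^+),\quad \dot u_i^- = \bigl(s(u_i^-,u_i^+)-f'(u_i^-)\bigr)\frac{f'(u_{i-1}^+)-f'(u_i^-)}{x_{i-1}-x_i}\frac{1}{f''(u_i^-)},\quad \dot u_i^+ = \bigl(s(u_i^-,u_i^+)-f'(u_i^+)\bigr)\frac{f'(u_{i+1}^-)-f'(u_i^+)}{x_{i+1}-x_i}\frac{1}{f''(u_i^+)}. \] Then, as $u_i^+-u_i^-\to 0$, this motion reduces to the motion of a characteristic particle, namely $\dot x_i = f'(u_i)$, $\dot u_i = 0$: that is, if $u_i^-,u_i^+\to u\in I$ (with the neighbors and positions fixed), the right-hand sides converge to $f'(u)$, $0$ and $0$ respectively.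
   Context: A shock particle is a triple $(x_i,u_i^-,u_i^+)$: a position $x_i$ with left state $u_i^-$ and right state $u_i^+$, required to satisfy the Oleinik entropy condition $f'(u_i^-)\ge f'(u_i^+)$. A shock particle with $u_i^-=u_i^+=u_i$ is called characteristic. This concerns the scalar conservation law $u_t+(f(u))_x=0$. *)

theory Defs
  imports "HOL-Analysis.Analysis"
begin

definition ext_diff_quot :: "(real \<Rightarrow> real) \<Rightarrow> (real \<Rightarrow> real) \<Rightarrow> real \<Rightarrow> real \<Rightarrow> real" where
  "ext_diff_quot f f' u v = (if u = v then f' u else (f u - f v) / (u - v))"

end

theory Submission
  imports Defs
begin

lemma mvt_aux:
  fixes f f' :: "real \<Rightarrow> real" and I :: "real set"
  assumes I: "is_interval I"
    and f': "\<And>y. y \<in> I \<Longrightarrow> (f has_real_derivative f' y) (at y within I)"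
    and pI: "p \<in> I" "q \<in> I" and pq: "p < q"
  shows "\<exists>c. p < c \<and> c < q \<and> f q - f p = f' c * (q - p)"
proof -
  have sub: "{p..q} \<subseteq> I"
  proof
    fix y assume "y \<in> {p..q}"
    then have "p \<le> y" "y \<le> q" by auto
    then show "y \<in> I" using I pI unfolding is_interval_1 by blast
  qed
  have "\<And>x. p \<le> x \<Longrightarrow> x \<le> q \<Longrightarrow> (f has_derivative (\<lambda>h. f' x * h)) (at x within {p..q})"
  proof -
    fix x assume "p \<le> x" "x \<le> q"
    then have "x \<in> I" using sub by auto
    then have "(f has_real_derivative f' x) (at x within {p..q})"
      using f' has_field_derivative_subset sub by blast
    then show "(f has_derivative (\<lambda>h. f' x * h)) (at x within {p..q})"
      by (simp add: has_field_derivative_def)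
  qed
  from mvt_simple[OF pq this] show ?thesis by auto
qed

lemma mvt_aux2:
  fixes f f' :: "real \<Rightarrow> real" and I :: "real set"
  assumes I: "is_interval I"
    and f': "\<And>y. y \<in> I \<Longrightarrow> (f has_real_derivative f' y) (at y within I)"
    and a: "a \<in> I" and b: "b \<in> I"
  shows "\<exists>c. ((a \<le> c \<and> c \<le> b) \<or> (b \<le> c \<and> c \<le> a)) \<and> ext_diff_quot f f' a b = f' c"
proof -
  consider "a = b" | "a < b" | "b < a" by linarith
  then show ?thesis
  proof cases
    case 1 then show ?thesis by (auto simp: ext_diff_quot_def)
  next
    case 2
    from mvt_aux[OF I f' a b 2] obtain c where c: "a < c" "c < b" "f b - f a = f' c * (b - a)" by blast
    have "ext_diff_quot f f' a b = (f a - f b) / (a - b)"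
      using 2 unfolding ext_diff_quot_def by simp
    also have "\<dots> = (f b - f a) / (b - a)" by (metis minus_diff_eq minus_divide_divide)
    also have "\<dots> = f' c" using c(3) 2 by (simp add: nonzero_mult_div_cancel_right)
    finally show ?thesis using c(1,2) by (intro exI[of _ c]) simp
  next
    case 3
    from mvt_aux[OF I f' b a 3] obtain c where c: "b < c" "c < a" "f a - f b = f' c * (a - b)" by blast
    have "ext_diff_quot f f' a b = (f a - f b) / (a - b)"
      using 3 unfolding ext_diff_quot_def by simp
    also have "\<dots> = f' c" using c(3) 3 by (simp add: nonzero_mult_div_cancel_right)
    finally show ?thesis using c(1,2) by (intro exI[of _ c]) simp
  qed
qed

lemma s_lim:
  fixes f f' :: "real \<Rightarrow> real" and I :: "real set" and u :: real
  assumes I: "is_interval I"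
    and f': "\<And>y. y \<in> I \<Longrightarrow> (f has_real_derivative f' y) (at y within I)"
    and cf: "continuous_on I f'"
    and u: "u \<in> I"
  shows "((\<lambda>(a, b). ext_diff_quot f f' a b) \<longlongrightarrow> f' u) (at (u, u) within I \<times> I)"
proof (unfold Lim_within, intro allI impI)
  fix e :: real assume e: "e > 0"
  from cf u e obtain d where d: "d > 0" and dd: "\<And>y. y \<in> I \<Longrightarrow> dist y u < d \<Longrightarrow> dist (f' y) (f' u) < e"
    unfolding continuous_on_iff by blast
  show "\<exists>d>0. \<forall>x\<in>I \<times> I. 0 < dist x (u, u) \<and> dist x (u, u) < d \<longrightarrow>
          dist ((\<lambda>(a, b). ext_diff_quot f f' a b) x) (f' u) < e"
  proof (intro exI[of _ d] conjI d ballI impI)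
    fix x assume x: "x \<in> I \<times> I" and dx: "0 < dist x (u, u) \<and> dist x (u, u) < d"
    obtain a b where ab: "x = (a, b)" by (cases x)
    have aI: "a \<in> I" and bI: "b \<in> I" using x ab by auto
    have "dist a u \<le> dist x (u,u)" "dist b u \<le> dist x (u,u)"
      unfolding ab dist_Pair_Pair by (rule real_sqrt_sum_squares_ge1, rule real_sqrt_sum_squares_ge2)
    then have da: "\<bar>a - u\<bar> < d" and db: "\<bar>b - u\<bar> < d" using dx by (auto simp: dist_real_def)
    from mvt_aux2[OF I f' aI bI] obtain c where
      c: "(a \<le> c \<and> c \<le> b) \<or> (b \<le> c \<and> c \<le> a)" and ce: "ext_diff_quot f f' a b = f' c"
      by blast
    have cI: "c \<in> I" using c I aI bI unfolding is_interval_1 by blast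
    have "\<bar>c - u\<bar> < d" using da db c by linarith
    then have "dist c u < d" by (simp add: dist_real_def)
    then show "dist ((\<lambda>(a, b). ext_diff_quot f f' a b) x) (f' u) < e"
      using dd[OF cI] ce ab by simp
  qed
qed

theorem lemma1:
  fixes f f' f'' :: "real \<Rightarrow> real" and I :: "real set"
    and xl x xr ul ur u :: real
  assumes I: "is_interval I"
    and f': "\<And>y. y \<in> I \<Longrightarrow> (f has_real_derivative f' y) (at y within I)"
    and f'': "\<And>y. y \<in> I \<Longrightarrow> (f' has_real_derivative f'' y) (at y within I)"
    and cont: "continuous_on I f''"
    and sgn: "(\<forall>y\<in>I. f'' y > 0) \<or> (\<forall>y\<in>I. f'' y < 0)"
    and pos: "xl < x" "x < xr"
    and nb: "ul \<in> I" "ur \<in> I"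
    and u: "u \<in> I"
  shows
    "((\<lambda>(a, b). ext_diff_quot f f' a b) \<longlongrightarrow> f' u)
       (at (u, u) within {(a, b). a \<in> I \<and> b \<in> I \<and> f' a \<ge> f' b})
     \<and> ((\<lambda>(a, b). (ext_diff_quot f f' a b - f' a) * ((f' ul - f' a) / (xl - x)) * (1 / f'' a))
          \<longlongrightarrow> 0)
       (at (u, u) within {(a, b). a \<in> I \<and> b \<in> I \<and> f' a \<ge> f' b})
     \<and> ((\<lambda>(a, b). (ext_diff_quot f f' a b - f' b) * ((f' ur - f' b) / (xr - x)) * (1 / f'' b))
          \<longlongrightarrow> 0)
       (at (u, u) within {(a, b). a \<in> I \<and> b \<in> I \<and> f' a \<ge> f' b})"
proof -
  let ?S = "{(a, b). a \<in> I \<and> b \<in> I \<and> f' a \<ge> f' b}"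
  have sub: "?S \<subseteq> I \<times> I" by auto
  have cf: "continuous_on I f'"
    using f'' DERIV_continuous continuous_on_eq_continuous_within by blast
  have s0: "((\<lambda>(a, b). ext_diff_quot f f' a b) \<longlongrightarrow> f' u) (at (u, u) within I \<times> I)"
    using s_lim[OF I f' cf u] .
  have uu: "(u, u) \<in> I \<times> I" using u by auto
  have c1: "continuous_on (I \<times> I) (\<lambda>p. f' (fst p))"
    by (rule continuous_on_compose2[OF cf continuous_on_fst]) auto
  have c2: "continuous_on (I \<times> I) (\<lambda>p. f' (snd p))"
    by (rule continuous_on_compose2[OF cf continuous_on_snd]) auto
  have c3: "continuous_on (I \<times> I) (\<lambda>p. f'' (fst p))"
    by (rule continuous_on_compose2[OF cont continuous_on_fst]) auto
  have c4: "continuous_on (I \<times> I) (\<lambda>p. f'' (snd p))"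
    by (rule continuous_on_compose2[OF cont continuous_on_snd]) auto
  have t1: "((\<lambda>p. f' (fst p)) \<longlongrightarrow> f' u) (at (u, u) within I \<times> I)"
    using c1 uu unfolding continuous_on_def by fastforce
  have t2: "((\<lambda>p. f' (snd p)) \<longlongrightarrow> f' u) (at (u, u) within I \<times> I)"
    using c2 uu unfolding continuous_on_def by fastforce
  have t3: "((\<lambda>p. f'' (fst p)) \<longlongrightarrow> f'' u) (at (u, u) within I \<times> I)"
    using c3 uu unfolding continuous_on_def by fastforce
  have t4: "((\<lambda>p. f'' (snd p)) \<longlongrightarrow> f'' u) (at (u, u) within I \<times> I)"
    using c4 uu unfolding continuous_on_def by fastforce
  have nz: "f'' u \<noteq> 0" using sgn u by force
  have s0': "((\<lambda>p. ext_diff_quot f f' (fst p) (snd p)) \<longlongrightarrow> f' u) (at (u, u) within I \<times> I)"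
    using s0 by (simp only: split_beta')
  have A: "((\<lambda>p. (ext_diff_quot f f' (fst p) (snd p) - f' (fst p)) * ((f' ul - f' (fst p)) / (xl - x)) * (1 / f'' (fst p)))
     \<longlongrightarrow> (f' u - f' u) * ((f' ul - f' u) / (xl - x)) * (1 / f'' u)) (at (u, u) within I \<times> I)"
    by (rule tendsto_mult[OF tendsto_mult[OF tendsto_diff[OF s0' t1] tendsto_divide[OF tendsto_diff[OF tendsto_const t1] tendsto_const]] tendsto_divide[OF tendsto_const t3]]) (use pos nz in auto)
  have B: "((\<lambda>p. (ext_diff_quot f f' (fst p) (snd p) - f' (snd p)) * ((f' ur - f' (snd p)) / (xr - x)) * (1 / f'' (snd p)))
     \<longlongrightarrow> (f' u - f' u) * ((f' ur - f' u) / (xr - x)) * (1 / f'' u)) (at (u, u) within I \<times> I)"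
    by (rule tendsto_mult[OF tendsto_mult[OF tendsto_diff[OF s0' t2] tendsto_divide[OF tendsto_diff[OF tendsto_const t2] tendsto_const]] tendsto_divide[OF tendsto_const t4]]) (use pos nz in auto)
  show ?thesis
    using tendsto_within_subset[OF s0 sub] tendsto_within_subset[OF A sub] tendsto_within_subset[OF B sub]
    unfolding split_beta' by simp
qed

end
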